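(* Let $G$ be a finitely generated group with decidable word problem and $S$ a finite generating set of $G$. Then the ouroboros problem for $(G,S)$ is in $\Sigma^0_1$.
   Context: The word problem of $G$ with respect to $S$ asks, given a word $w$ over $S\cup S^{-1}$, whether $w$ represents $1_G$. A tileset graph for $(G,S)$ is a finite multigraph $\Gamma=(A,B)$ whose edges are triples $(a,a',s)$ with $a,a'\in A$, $s\in S\cup S^{-1}$, such that $(a,a',s)\in B$ implies $(a',a,s^{-1})\in B$. A $\Gamma$-ouroboros is a pair $(\omega,\zeta)$ with $\omega:\{0,\dots,n\}\to G$, $n\ge 3$, injective on $\{0,\dots,n-1\}$ with $\omega(n)=\omega(0)$, and $\zeta:\{0,\dots,n\}\to A$, such that for $0\le i<n$: $d\omega_i:=\omega(i)^{-1}\omega(i+1)\in S\cup S^{-1}$ and $(\zeta(i),\zeta(i+1),d\omega_i)\in B$. The ouroboros problem for $(G,S)$: given $\Gamma$, decide whether a $\Gamma$-ouroboros exists. *)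

theory Defs
  imports "HOL-Algebra.Generated_Groups" "HOL-Library.Nat_Bijection"
begin

datatype recf =
    Zero
  | Succ
  | Proj nat
  | Comp recf "recf list"
  | PrimRec recf recf
  | Minim recf

inductive rec_eval :: "recf \<Rightarrow> nat list \<Rightarrow> nat \<Rightarrow> bool" where
  zero: "rec_eval Zero xs 0"
| succ: "rec_eval Succ (x # xs) (Suc x)"
| proj: "i < length xs \<Longrightarrow> rec_eval (Proj i) xs (xs ! i)"
| comp: "list_all2 (\<lambda>g y. rec_eval g xs y) gs ys \<Longrightarrow> rec_eval f ys z
          \<Longrightarrow> rec_eval (Comp f gs) xs z"
| pr0: "rec_eval f xs y \<Longrightarrow> rec_eval (PrimRec f g) (0 # xs) y"
| prS: "rec_eval (PrimRec f g) (n # xs) y \<Longrightarrow> rec_eval g (n # y # xs) z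
          \<Longrightarrow> rec_eval (PrimRec f g) (Suc n # xs) z"
| mn: "rec_eval f (n # xs) 0 \<Longrightarrow> (\<forall>k<n. \<exists>m. rec_eval f (k # xs) (Suc m))
          \<Longrightarrow> rec_eval (Minim f) xs n"

definition computable :: "(nat \<Rightarrow> nat) \<Rightarrow> bool" where
  "computable h \<longleftrightarrow> (\<exists>r. \<forall>x. rec_eval r [x] (h x))"

definition decidable_set :: "nat set \<Rightarrow> bool" where
  "decidable_set A \<longleftrightarrow> computable (\<lambda>x. if x \<in> A then 1 else 0)"

definition sigma01 :: "nat set \<Rightarrow> bool" where
  "sigma01 A \<longleftrightarrow> (\<exists>R. decidable_set R \<and> (\<forall>x. x \<in> A \<longleftrightarrow> (\<exists>y. prod_encode (x, y) \<in> R)))"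

definition valid_letter :: "'a list \<Rightarrow> nat \<Rightarrow> bool" where
  "valid_letter gens k \<longleftrightarrow> k div 2 < length gens"

definition letter_val :: "('a, 'b) monoid_scheme \<Rightarrow> 'a list \<Rightarrow> nat \<Rightarrow> 'a" where
  "letter_val G gens k =
     (if even k then gens ! (k div 2) else inv\<^bsub>G\<^esub> (gens ! (k div 2)))"

definition word_val :: "('a, 'b) monoid_scheme \<Rightarrow> 'a list \<Rightarrow> nat list \<Rightarrow> 'a" where
  "word_val G gens w = foldr (\<lambda>k x. letter_val G gens k \<otimes>\<^bsub>G\<^esub> x) w \<one>\<^bsub>G\<^esub>"

definition word_problem :: "('a, 'b) monoid_scheme \<Rightarrow> 'a list \<Rightarrow> nat set" where
  "word_problem G gens =
     {c. (\<forall>k \<in> set (list_decode c). valid_letter gens k) \<and>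
         word_val G gens (list_decode c) = \<one>\<^bsub>G\<^esub>}"

definition tileset_graph ::
  "('a, 'b) monoid_scheme \<Rightarrow> 'a set \<Rightarrow> 't set \<Rightarrow> ('t \<times> 't \<times> 'a) set \<Rightarrow> bool" where
  "tileset_graph G S A B \<longleftrightarrow>
     finite A \<and> finite B \<and> B \<subseteq> A \<times> A \<times> (S \<union> m_inv G ` S) \<and>
     (\<forall>a a' s. (a, a', s) \<in> B \<longrightarrow> (a', a, inv\<^bsub>G\<^esub> s) \<in> B)"

definition is_ouroboros ::
  "('a, 'b) monoid_scheme \<Rightarrow> 'a set \<Rightarrow> 't set \<Rightarrow> ('t \<times> 't \<times> 'a) set \<Rightarrow>
   nat \<Rightarrow> (nat \<Rightarrow> 'a) \<Rightarrow> (nat \<Rightarrow> 't) \<Rightarrow> bool" where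
  "is_ouroboros G S A B n \<omega> \<zeta> \<longleftrightarrow>
     n \<ge> 3 \<and> (\<forall>i\<le>n. \<omega> i \<in> carrier G) \<and> inj_on \<omega> {0..<n} \<and> \<omega> n = \<omega> 0 \<and>
     (\<forall>i\<le>n. \<zeta> i \<in> A) \<and>
     (\<forall>i<n. inv\<^bsub>G\<^esub> (\<omega> i) \<otimes>\<^bsub>G\<^esub> \<omega> (Suc i) \<in> S \<union> m_inv G ` S \<and>
            (\<zeta> i, \<zeta> (Suc i), inv\<^bsub>G\<^esub> (\<omega> i) \<otimes>\<^bsub>G\<^esub> \<omega> (Suc i)) \<in> B)"

definition has_ouroboros ::
  "('a, 'b) monoid_scheme \<Rightarrow> 'a set \<Rightarrow> 't set \<Rightarrow> ('t \<times> 't \<times> 'a) set \<Rightarrow> bool" where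
  "has_ouroboros G S A B \<longleftrightarrow> (\<exists>n \<omega> \<zeta>. is_ouroboros G S A B n \<omega> \<zeta>)"

text \<open>A code c decodes to (m, e): tiles are {0..<m}; e is the code of a list of edge codes,
  each edge code decoding to (a, (a', k)) with letter code k.\<close>

definition edge_decode :: "nat \<Rightarrow> nat \<times> nat \<times> nat" where
  "edge_decode d = (let (a, r) = prod_decode d; (a', k) = prod_decode r in (a, a', k))"

definition code_edges :: "nat \<Rightarrow> (nat \<times> nat \<times> nat) list" where
  "code_edges c = map edge_decode (list_decode (snd (prod_decode c)))"

definition code_tiles :: "nat \<Rightarrow> nat set" where
  "code_tiles c = {0..<fst (prod_decode c)}"

definition valid_code :: "'a list \<Rightarrow> nat \<Rightarrow> bool" where
  "valid_code gens c \<longleftrightarrow>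
     (\<forall>(a, a', k) \<in> set (code_edges c).
        a \<in> code_tiles c \<and> a' \<in> code_tiles c \<and> valid_letter gens k)"

definition code_graph :: "('a, 'b) monoid_scheme \<Rightarrow> 'a list \<Rightarrow> nat \<Rightarrow> (nat \<times> nat \<times> 'a) set" where
  "code_graph G gens c = (\<lambda>(a, a', k). (a, a', letter_val G gens k)) ` set (code_edges c)"

definition ouroboros_problem :: "('a, 'b) monoid_scheme \<Rightarrow> 'a list \<Rightarrow> nat set" where
  "ouroboros_problem G gens =
     {c. valid_code gens c \<and>
         tileset_graph G (set gens) (code_tiles c) (code_graph G gens c) \<and>
         has_ouroboros G (set gens) (code_tiles c) (code_graph G gens c)}"

end

theory Submission
  imports Defs
begin

definition recfn :: "nat \<Rightarrow> (nat list \<Rightarrow> nat) \<Rightarrow> bool" where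
  "recfn n f \<longleftrightarrow> (\<exists>r. \<forall>xs. length xs = n \<longrightarrow> rec_eval r xs (f xs))"

lemma recfn_cong: "recfn n f \<Longrightarrow> (\<And>xs. length xs = n \<Longrightarrow> f xs = g xs) \<Longrightarrow> recfn n g"
  unfolding recfn_def by metis

lemma recfn_zero: "recfn n (\<lambda>_. 0)"
  unfolding recfn_def using rec_eval.zero by blast

lemma recfn_proj: "i < n \<Longrightarrow> recfn n (\<lambda>xs. xs ! i)"
  unfolding recfn_def using rec_eval.proj[where i=i] by auto

lemma recfn_list:
  "\<forall>g\<in>set gs. recfn n g \<Longrightarrow> \<exists>rs. length rs = length gs \<and>
     (\<forall>xs. length xs = n \<longrightarrow> list_all2 (\<lambda>r y. rec_eval r xs y) rs (map (\<lambda>g. g xs) gs))"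
proof (induction gs)
  case Nil
  then show ?case by auto
next
  case (Cons g gs)
  then obtain rs where rs: "length rs = length gs"
    "\<forall>xs. length xs = n \<longrightarrow> list_all2 (\<lambda>r y. rec_eval r xs y) rs (map (\<lambda>g. g xs) gs)" by auto
  obtain r where r: "\<forall>xs. length xs = n \<longrightarrow> rec_eval r xs (g xs)"
    using Cons.prems unfolding recfn_def by auto
  show ?case
    by (rule exI[of _ "r # rs"]) (use rs r in auto)
qed

lemma recfn_comp:
  assumes "recfn (length gs) f" "\<forall>g\<in>set gs. recfn n g"
  shows "recfn n (\<lambda>xs. f (map (\<lambda>g. g xs) gs))"
proof -
  obtain rf where rf: "\<forall>ys. length ys = length gs \<longrightarrow> rec_eval rf ys (f ys)"
    using assms(1) unfolding recfn_def by blast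
  obtain rs where rs: "\<forall>xs. length xs = n \<longrightarrow> list_all2 (\<lambda>r y. rec_eval r xs y) rs (map (\<lambda>g. g xs) gs)"
    using recfn_list[OF assms(2)] by blast
  have "rec_eval (Comp rf rs) xs (f (map (\<lambda>g. g xs) gs))" if "length xs = n" for xs
    by (rule rec_eval.comp) (use rs rf that in auto)
  then show ?thesis unfolding recfn_def by blast
qed

lemma recfn_comp1: "recfn 1 (\<lambda>xs. F (hd xs)) \<Longrightarrow> recfn n g \<Longrightarrow> recfn n (\<lambda>xs. F (g xs))"
  using recfn_comp[of "[g]" "\<lambda>xs. F (hd xs)" n] by simp

lemma recfn_comp2: "recfn 2 (\<lambda>xs. F (xs!0) (xs!1)) \<Longrightarrow> recfn n g \<Longrightarrow> recfn n h \<Longrightarrow>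
   recfn n (\<lambda>xs. F (g xs) (h xs))"
  using recfn_comp[of "[g,h]" "\<lambda>xs. F (xs!0) (xs!1)" n] by (simp add: numeral_2_eq_2)

lemma recfn_comp3: "recfn 3 (\<lambda>xs. F (xs!0) (xs!1) (xs!2)) \<Longrightarrow> recfn n g \<Longrightarrow> recfn n h \<Longrightarrow> recfn n k \<Longrightarrow>
   recfn n (\<lambda>xs. F (g xs) (h xs) (k xs))"
  using recfn_comp[of "[g,h,k]" "\<lambda>xs. F (xs!0) (xs!1) (xs!2)" n] by (simp add: numeral_3_eq_3)

lemma recfn_succ1: "recfn 1 (\<lambda>xs. Suc (hd xs))"
proof -
  have "rec_eval Succ xs (Suc (hd xs))" if "length xs = 1" for xs
    using that rec_eval.succ[of "hd xs" "tl xs"] by (cases xs) auto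
  then show ?thesis unfolding recfn_def by blast
qed

lemma recfn_suc: "recfn n f \<Longrightarrow> recfn n (\<lambda>xs. Suc (f xs))"
  by (rule recfn_comp1[OF recfn_succ1])

lemma recfn_const: "recfn n (\<lambda>_. c)"
proof (induction c)
  case 0
  then show ?case by (rule recfn_zero)
next
  case (Suc c)
  then show ?case by (rule recfn_suc)
qed

fun primr :: "(nat list \<Rightarrow> nat) \<Rightarrow> (nat list \<Rightarrow> nat) \<Rightarrow> nat \<Rightarrow> nat list \<Rightarrow> nat" where
  "primr F G 0 xs = F xs"
| "primr F G (Suc k) xs = G (k # primr F G k xs # xs)"

lemma recfn_pr:
  assumes "recfn n F" "recfn (Suc (Suc n)) G"
  shows "recfn (Suc n) (\<lambda>xs. primr F G (hd xs) (tl xs))"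
proof -
  obtain rF where rF: "\<forall>xs. length xs = n \<longrightarrow> rec_eval rF xs (F xs)"
    using assms(1) unfolding recfn_def by blast
  obtain rG where rG: "\<forall>xs. length xs = Suc (Suc n) \<longrightarrow> rec_eval rG xs (G xs)"
    using assms(2) unfolding recfn_def by blast
  have *: "rec_eval (PrimRec rF rG) (k # xs) (primr F G k xs)" if "length xs = n" for k xs
  proof (induction k)
    case 0
    show ?case by (rule rec_eval.pr0) (use rF that in simp)
  next
    case (Suc k)
    have "rec_eval rG (k # primr F G k xs # xs) (G (k # primr F G k xs # xs))"
      using rG that by simp
    then show ?case using Suc.IH by (simp add: rec_eval.prS)
  qed
  have "rec_eval (PrimRec rF rG) xs (primr F G (hd xs) (tl xs))" if "length xs = Suc n" for xs
  proof (cases xs)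
    case (Cons a ys)
    then show ?thesis using *[of ys a] that by simp
  qed (use that in simp)
  then show ?thesis unfolding recfn_def by blast
qed

lemma recfn_minim:
  assumes "recfn (Suc n) f" "\<And>xs. length xs = n \<Longrightarrow> \<exists>k. f (k # xs) = 0"
  shows "recfn n (\<lambda>xs. LEAST k. f (k # xs) = 0)"
proof -
  obtain r where r: "\<forall>xs. length xs = Suc n \<longrightarrow> rec_eval r xs (f xs)"
    using assms(1) unfolding recfn_def by blast
  have "rec_eval (Minim r) xs (LEAST k. f (k # xs) = 0)" if "length xs = n" for xs
  proof (rule rec_eval.mn)
    have "f ((LEAST k. f (k # xs) = 0) # xs) = 0" using assms(2)[OF that] by (rule LeastI_ex)
    moreover have "rec_eval r ((LEAST k. f (k # xs) = 0) # xs) (f ((LEAST k. f (k # xs) = 0) # xs))"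
      using r that by simp
    ultimately show "rec_eval r ((LEAST k. f (k # xs) = 0) # xs) 0" by simp
    show "\<forall>k<(LEAST k. f (k # xs) = 0). \<exists>m. rec_eval r (k # xs) (Suc m)"
    proof (intro allI impI)
      fix k assume "k < (LEAST k. f (k # xs) = 0)"
      then have "f (k # xs) \<noteq> 0" by (rule not_less_Least)
      then have "f (k # xs) = Suc (f (k # xs) - 1)" by simp
      moreover have "rec_eval r (k # xs) (f (k # xs))" using r that by simp
      ultimately show "\<exists>m. rec_eval r (k # xs) (Suc m)" by (intro exI[of _ "f (k # xs) - 1"]) simp
    qed
  qed
  then show ?thesis unfolding recfn_def by blast
qed

lemma recfn_cong': "recfn m f \<Longrightarrow> m = n \<Longrightarrow> (\<And>xs. length xs = n \<Longrightarrow> f xs = g xs) \<Longrightarrow> recfn n g"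
  using recfn_cong by blast

lemma len2: "length xs = 2 \<Longrightarrow> xs = [xs!0, xs!1]"
  by (cases xs; cases "tl xs"; auto simp: numeral_2_eq_2)

lemma len1: "length xs = 1 \<Longrightarrow> xs = [hd xs]"
  by (cases xs) auto

lemma recfn_add2: "recfn 2 (\<lambda>xs. xs!0 + xs!1)"
proof -
  have EQ: "primr (\<lambda>ys. ys!0) (\<lambda>ys. Suc (ys!1)) k ys = k + ys!0" for k ys
    by (induction k) auto
  have "recfn (Suc 1) (\<lambda>xs. primr (\<lambda>ys. ys!0) (\<lambda>ys. Suc (ys!1)) (hd xs) (tl xs))"
    by (rule recfn_pr) (auto intro: recfn_proj recfn_suc)
  then show ?thesis
    by (rule recfn_cong', simp, unfold EQ) (auto simp: numeral_2_eq_2 length_Suc_conv)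
qed

lemma recfn_pred1: "recfn 1 (\<lambda>xs. hd xs - 1)"
proof -
  have EQ: "primr (\<lambda>ys. 0) (\<lambda>ys. ys!0) k ys = k - 1" for k ys
    by (induction k) auto
  have "recfn (Suc 0) (\<lambda>xs. primr (\<lambda>ys. 0) (\<lambda>ys. ys!0) (hd xs) (tl xs))"
    by (rule recfn_pr) (auto intro: recfn_proj recfn_zero)
  then show ?thesis
    by (rule recfn_cong', simp, unfold EQ) (auto simp: length_Suc_conv)
qed

lemma recfn_sub2: "recfn 2 (\<lambda>xs. xs!0 - xs!1)"
proof -
  have EQ: "primr (\<lambda>ys. ys!0) (\<lambda>ys. ys!1 - 1) k ys = ys!0 - k" for k ys
    by (induction k) auto
  have "recfn (Suc (Suc (Suc 0))) (\<lambda>ys. ys!1 - 1)"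
    by (rule recfn_comp1[OF recfn_pred1]) (auto intro: recfn_proj)
  then have "recfn (Suc 1) (\<lambda>xs. primr (\<lambda>ys. ys!0) (\<lambda>ys. ys!1 - 1) (hd xs) (tl xs))"
    by (intro recfn_pr) (auto intro: recfn_proj)
  then have "recfn 2 (\<lambda>xs. (\<lambda>a b. b - a) (xs!0) (xs!1))"
    by (rule recfn_cong', simp, unfold EQ) (auto simp: numeral_2_eq_2 length_Suc_conv)
  then have "recfn 2 (\<lambda>xs. (\<lambda>a b. b - a) (xs!1) (xs!0))"
    by (rule recfn_comp2) (auto intro: recfn_proj)
  then show ?thesis by simp
qed

lemma recfn_add: "recfn n f \<Longrightarrow> recfn n g \<Longrightarrow> recfn n (\<lambda>xs. f xs + g xs)"
  by (rule recfn_comp2[OF recfn_add2])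

lemma recfn_sub: "recfn n f \<Longrightarrow> recfn n g \<Longrightarrow> recfn n (\<lambda>xs. f xs - g xs)"
  by (rule recfn_comp2[OF recfn_sub2])

lemma recfn_mult2: "recfn 2 (\<lambda>xs. xs!0 * xs!1)"
proof -
  have EQ: "primr (\<lambda>ys. 0) (\<lambda>ys. ys!1 + ys!2) k ys = k * ys!0" for k ys
    by (induction k) auto
  have "recfn (Suc 1) (\<lambda>xs. primr (\<lambda>ys. 0) (\<lambda>ys. ys!1 + ys!2) (hd xs) (tl xs))"
    by (rule recfn_pr) (auto intro!: recfn_proj recfn_zero recfn_add)
  then show ?thesis
    by (rule recfn_cong', simp, unfold EQ) (auto simp: numeral_2_eq_2 length_Suc_conv)
qed

lemma recfn_mult: "recfn n f \<Longrightarrow> recfn n g \<Longrightarrow> recfn n (\<lambda>xs. f xs * g xs)"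
  by (rule recfn_comp2[OF recfn_mult2])

lemma recfn_tri1: "recfn 1 (\<lambda>xs. triangle (hd xs))"
proof -
  have EQ: "primr (\<lambda>ys. 0) (\<lambda>ys. ys!1 + Suc (ys!0)) k ys = triangle k" for k ys
    by (induction k) auto
  have "recfn (Suc 0) (\<lambda>xs. primr (\<lambda>ys. 0) (\<lambda>ys. ys!1 + Suc (ys!0)) (hd xs) (tl xs))"
    by (rule recfn_pr) (auto intro!: recfn_proj recfn_zero recfn_add recfn_suc)
  then show ?thesis
    by (rule recfn_cong', simp, unfold EQ) (auto simp: length_Suc_conv)
qed

lemma recfn_penc2: "recfn 2 (\<lambda>xs. prod_encode (xs!0, xs!1))"
proof -
  have "recfn 2 (\<lambda>xs. triangle (xs!0 + xs!1) + xs!0)"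
    by (intro recfn_add recfn_comp1[OF recfn_tri1] recfn_proj) auto
  then show ?thesis by (simp add: prod_encode_def)
qed

definition troot :: "nat \<Rightarrow> nat" where
  "troot z = (LEAST s. Suc z - triangle (Suc s) = 0)"

lemma recfn_troot: "recfn 1 (\<lambda>xs. troot (hd xs))"
proof -
  have "recfn 1 (\<lambda>xs. LEAST k. (\<lambda>ys. Suc (ys!1) - triangle (Suc (ys!0))) (k # xs) = 0)"
  proof (rule recfn_minim)
    show "recfn (Suc 1) (\<lambda>ys. Suc (ys!1) - triangle (Suc (ys!0)))"
      by (intro recfn_sub recfn_suc recfn_comp1[OF recfn_tri1] recfn_proj) auto
    show "\<exists>k. (\<lambda>ys. Suc (ys!1) - triangle (Suc (ys!0))) (k # xs) = 0" for xs
      by (rule exI[of _ "xs!0"]) simp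
  qed
  then show ?thesis
    by (rule recfn_cong) (auto simp: length_Suc_conv troot_def)
qed

lemma prod_decode_troot:
  "prod_decode z = (z - triangle (troot z), troot z - (z - triangle (troot z)))"
proof -
  define t where "t = troot z"
  have ex: "\<exists>s. Suc z - triangle (Suc s) = 0" by (rule exI[of _ z]) simp
  have t1: "Suc z - triangle (Suc t) = 0" unfolding t_def troot_def by (rule LeastI_ex[OF ex])
  have t2: "triangle t \<le> z"
  proof (cases t)
    case (Suc s)
    then have "s < t" by simp
    then have "Suc z - triangle (Suc s) \<noteq> 0" unfolding t_def troot_def by (rule not_less_Least)
    then show ?thesis using Suc by simp
  qed simp
  have "z - triangle t \<le> t" using t1 t2 by simp
  then have "prod_encode (z - triangle t, t - (z - triangle t)) = z"
    using t2 by (simp add: prod_encode_def)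
  then show ?thesis unfolding t_def[symmetric] by (metis prod_encode_inverse)
qed

definition rec1 :: "(nat \<Rightarrow> nat) \<Rightarrow> bool" where
  "rec1 f \<longleftrightarrow> recfn 1 (\<lambda>xs. f (hd xs))"

definition rec1p :: "(nat \<Rightarrow> bool) \<Rightarrow> bool" where
  "rec1p P \<longleftrightarrow> rec1 (\<lambda>x. if P x then 1 else 0)"

lemma rec1_cong: "rec1 f \<Longrightarrow> (\<And>x. f x = g x) \<Longrightarrow> rec1 g"
proof -
  assume "rec1 f" "\<And>x. f x = g x"
  then have "f = g" by auto
  then show "rec1 g" using \<open>rec1 f\<close> by simp
qed

lemma rec1_id: "rec1 (\<lambda>x. x)"
  unfolding rec1_def by (rule recfn_cong[OF recfn_proj[of 0]]) (auto simp: length_Suc_conv)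

lemma rec1_const: "rec1 (\<lambda>x. c)"
  unfolding rec1_def by (rule recfn_const)

lemma rec1_Suc: "rec1 f \<Longrightarrow> rec1 (\<lambda>x. Suc (f x))"
  unfolding rec1_def by (rule recfn_suc)

lemma rec1_add: "rec1 f \<Longrightarrow> rec1 g \<Longrightarrow> rec1 (\<lambda>x. f x + g x)"
  unfolding rec1_def by (rule recfn_add)

lemma rec1_sub: "rec1 f \<Longrightarrow> rec1 g \<Longrightarrow> rec1 (\<lambda>x. f x - g x)"
  unfolding rec1_def by (rule recfn_sub)

lemma rec1_mult: "rec1 f \<Longrightarrow> rec1 g \<Longrightarrow> rec1 (\<lambda>x. f x * g x)"
  unfolding rec1_def by (rule recfn_mult)

lemma rec1_comp: "rec1 F \<Longrightarrow> rec1 g \<Longrightarrow> rec1 (\<lambda>x. F (g x))"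
  unfolding rec1_def by (rule recfn_comp1)

lemma rec1_tri: "rec1 triangle"
  unfolding rec1_def by (rule recfn_tri1)

lemma rec1_troot: "rec1 troot"
  unfolding rec1_def by (rule recfn_troot)

lemma rec1_penc: "rec1 f \<Longrightarrow> rec1 g \<Longrightarrow> rec1 (\<lambda>x. prod_encode (f x, g x))"
  unfolding rec1_def by (rule recfn_comp2[OF recfn_penc2])

lemma rec1_pd1': "rec1 (\<lambda>z. fst (prod_decode z))"
proof -
  have "rec1 (\<lambda>z. z - triangle (troot z))"
    by (intro rec1_sub rec1_id rec1_comp[OF rec1_tri] rec1_comp[OF rec1_troot])
  then show ?thesis by (rule rec1_cong) (subst prod_decode_troot, simp)
qed

lemma rec1_pd2': "rec1 (\<lambda>z. snd (prod_decode z))"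
proof -
  have "rec1 (\<lambda>z. troot z - (z - triangle (troot z)))"
    by (intro rec1_sub rec1_id rec1_comp[OF rec1_tri] rec1_comp[OF rec1_troot])
  then show ?thesis by (rule rec1_cong) (subst prod_decode_troot, simp)
qed

lemma rec1_pd1: "rec1 f \<Longrightarrow> rec1 (\<lambda>x. fst (prod_decode (f x)))"
  by (rule rec1_comp[OF rec1_pd1'])

lemma rec1_pd2: "rec1 f \<Longrightarrow> rec1 (\<lambda>x. snd (prod_decode (f x)))"
  by (rule rec1_comp[OF rec1_pd2'])

lemma rec1_comp2:
  assumes "rec1 (\<lambda>z. F (fst (prod_decode z)) (snd (prod_decode z)))" "rec1 f" "rec1 g"
  shows "rec1 (\<lambda>x. F (f x) (g x))"
proof -
  have "rec1 (\<lambda>x. (\<lambda>z. F (fst (prod_decode z)) (snd (prod_decode z))) (prod_encode (f x, g x)))"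
    by (rule rec1_comp[OF assms(1) rec1_penc[OF assms(2,3)]])
  then show ?thesis by simp
qed

lemma rec1_if: "rec1p P \<Longrightarrow> rec1 f \<Longrightarrow> rec1 g \<Longrightarrow> rec1 (\<lambda>x. if P x then f x else g x)"
proof -
  assume a: "rec1p P" "rec1 f" "rec1 g"
  have "rec1 (\<lambda>x. (if P x then 1 else 0) * f x + (1 - (if P x then 1 else 0)) * g x)"
    using a unfolding rec1p_def by (intro rec1_add rec1_mult rec1_sub rec1_const)
  then show ?thesis by (rule rec1_cong) simp
qed

lemma rec1p_true: "rec1p (\<lambda>x. True)"
  unfolding rec1p_def by (simp add: rec1_const)

lemma rec1p_not: "rec1p P \<Longrightarrow> rec1p (\<lambda>x. \<not> P x)"
  unfolding rec1p_def
  by (rule rec1_cong[OF rec1_sub[OF rec1_const[of 1]]]) auto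

lemma rec1p_conj: "rec1p P \<Longrightarrow> rec1p Q \<Longrightarrow> rec1p (\<lambda>x. P x \<and> Q x)"
proof -
  assume "rec1p P" "rec1p Q"
  then have "rec1 (\<lambda>x. (if P x then 1 else 0) * (if Q x then 1 else 0))"
    unfolding rec1p_def by (rule rec1_mult)
  then show ?thesis unfolding rec1p_def by (rule rec1_cong) simp
qed

lemma rec1p_disj: "rec1p P \<Longrightarrow> rec1p Q \<Longrightarrow> rec1p (\<lambda>x. P x \<or> Q x)"
proof -
  assume "rec1p P" "rec1p Q"
  then have "rec1p (\<lambda>x. \<not> (\<not> P x \<and> \<not> Q x))" by (intro rec1p_not rec1p_conj)
  then show ?thesis by simp
qed

lemma rec1p_imp: "rec1p P \<Longrightarrow> rec1p Q \<Longrightarrow> rec1p (\<lambda>x. P x \<longrightarrow> Q x)"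
proof -
  assume "rec1p P" "rec1p Q"
  then have "rec1p (\<lambda>x. \<not> P x \<or> Q x)" by (intro rec1p_not rec1p_disj)
  then show ?thesis by simp
qed

lemma rec1p_eq: "rec1 f \<Longrightarrow> rec1 g \<Longrightarrow> rec1p (\<lambda>x. f x = g x)"
proof -
  assume "rec1 f" "rec1 g"
  then have "rec1 (\<lambda>x. 1 - ((f x - g x) + (g x - f x)))"
    by (intro rec1_sub rec1_add rec1_const)
  then show ?thesis unfolding rec1p_def by (rule rec1_cong) simp
qed

lemma rec1p_less: "rec1 f \<Longrightarrow> rec1 g \<Longrightarrow> rec1p (\<lambda>x. f x < g x)"
proof -
  assume "rec1 f" "rec1 g"
  then have "rec1 (\<lambda>x. 1 - (1 - (g x - f x)))"
    by (intro rec1_sub rec1_const)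
  then show ?thesis unfolding rec1p_def by (rule rec1_cong) simp
qed

lemma rec1p_le: "rec1 f \<Longrightarrow> rec1 g \<Longrightarrow> rec1p (\<lambda>x. f x \<le> g x)"
proof -
  assume "rec1 f" "rec1 g"
  then have "rec1p (\<lambda>x. \<not> g x < f x)" by (intro rec1p_not rec1p_less)
  then show ?thesis by (simp add: not_less)
qed

fun PR :: "(nat \<Rightarrow> nat) \<Rightarrow> (nat \<Rightarrow> nat) \<Rightarrow> nat \<Rightarrow> nat \<Rightarrow> nat" where
  "PR B S 0 p = B p"
| "PR B S (Suc k) p = S (prod_encode (k, prod_encode (PR B S k p, p)))"

lemma rec1_PR': "rec1 B \<Longrightarrow> rec1 S \<Longrightarrow> rec1 (\<lambda>z. PR B S (fst (prod_decode z)) (snd (prod_decode z)))"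
proof -
  assume B: "rec1 B" and S: "rec1 S"
  define Gf where "Gf = (\<lambda>ys. S (prod_encode (ys!0, prod_encode (ys!1, ys!2))))"
  define Bf where "Bf = (\<lambda>ys::nat list. B (hd ys))"
  have G: "recfn (Suc (Suc (Suc 0))) Gf"
    using S unfolding rec1_def Gf_def
    by (rule recfn_comp1[of S]) (intro recfn_comp2[OF recfn_penc2] recfn_proj; simp)
  have EQ: "primr Bf Gf k [p] = PR B S k p" for k p
    by (induction k) (auto simp: Bf_def Gf_def)
  have "recfn (Suc 1) (\<lambda>xs. primr Bf Gf (hd xs) (tl xs))"
    using B G unfolding rec1_def Bf_def by (intro recfn_pr) auto
  then have "recfn 2 (\<lambda>xs. (\<lambda>a b. PR B S a b) (xs!0) (xs!1))"
    by (rule recfn_cong') (auto simp: EQ numeral_2_eq_2 length_Suc_conv)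
  then have "recfn 1 (\<lambda>xs. (\<lambda>a b. PR B S a b) (fst (prod_decode (hd xs))) (snd (prod_decode (hd xs))))"
    using rec1_pd1[OF rec1_id] rec1_pd2[OF rec1_id] unfolding rec1_def
    by (rule recfn_comp2)
  then show ?thesis unfolding rec1_def by simp
qed

lemma rec1_PR: "rec1 B \<Longrightarrow> rec1 S \<Longrightarrow> rec1 k \<Longrightarrow> rec1 p \<Longrightarrow> rec1 (\<lambda>x. PR B S (k x) (p x))"
  by (rule rec1_comp2[OF rec1_PR'])

lemma rec1p_ball:
  assumes P: "rec1p (\<lambda>z. P (fst (prod_decode z)) (snd (prod_decode z)))" and b: "rec1 b"
  shows "rec1p (\<lambda>x. \<forall>i<b x. P i x)"
proof -
  define C where "C z = (if P (fst (prod_decode z)) (snd (prod_decode z)) then 1 else (0::nat))" for z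
  have C: "rec1 C" using P unfolding rec1p_def C_def .
  define S where "S w = fst (prod_decode (snd (prod_decode w))) *
      C (prod_encode (fst (prod_decode w), snd (prod_decode (snd (prod_decode w)))))" for w
  have S: "rec1 S" unfolding S_def
    by (intro rec1_mult rec1_comp[OF C] rec1_penc rec1_pd1 rec1_pd2 rec1_id)
  have eq: "PR (\<lambda>_. 1) S n x = (if \<forall>i<n. P i x then 1 else 0)" for n x
    by (induction n) (auto simp: S_def C_def less_Suc_eq)
  have "rec1 (\<lambda>x. PR (\<lambda>_. 1) S (b x) x)"
    by (intro rec1_PR rec1_const S b rec1_id)
  then show ?thesis unfolding rec1p_def eq .
qed

lemma rec1p_bex:
  assumes P: "rec1p (\<lambda>z. P (fst (prod_decode z)) (snd (prod_decode z)))" and b: "rec1 b"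
  shows "rec1p (\<lambda>x. \<exists>i<b x. P i x)"
proof -
  have "rec1p (\<lambda>x. \<not> (\<forall>i<b x. \<not> P i x))"
    by (intro rec1p_not rec1p_ball[where P="\<lambda>i x. \<not> P i x"] P b)
  then show ?thesis by simp
qed

lemmas rec_intros = rec1_id rec1_const rec1_Suc rec1_add rec1_sub rec1_mult rec1_penc rec1_pd1 rec1_pd2
  rec1_if rec1p_true rec1p_not rec1p_conj rec1p_disj rec1p_imp rec1p_eq rec1p_less rec1p_le
  rec1p_ball rec1p_bex

definition ltl :: "nat \<Rightarrow> nat" where
  "ltl c = (if c = 0 then 0 else snd (prod_decode (c - 1)))"

definition lhd :: "nat \<Rightarrow> nat" where
  "lhd c = fst (prod_decode (c - 1))"

definition lcons :: "nat \<Rightarrow> nat \<Rightarrow> nat" where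
  "lcons x l = Suc (prod_encode (x, l))"

definition ldrop :: "nat \<Rightarrow> nat \<Rightarrow> nat" where
  "ldrop i c = PR (\<lambda>p. p) (\<lambda>w. ltl (fst (prod_decode (snd (prod_decode w))))) i c"

definition lnth :: "nat \<Rightarrow> nat \<Rightarrow> nat" where
  "lnth c i = lhd (ldrop i c)"

definition Stk :: "nat \<Rightarrow> nat" where
  "Stk w = lcons (lnth (fst (prod_decode (snd (prod_decode (snd (prod_decode w))))))
                       (snd (prod_decode (snd (prod_decode (snd (prod_decode w))))) - Suc (fst (prod_decode w))))
                 (fst (prod_decode (snd (prod_decode w))))"

definition tk :: "nat \<Rightarrow> nat \<Rightarrow> nat" where
  "tk d L = PR (\<lambda>_. 0) Stk L (prod_encode (d, L))"

lemma rec1_ltl: "rec1 f \<Longrightarrow> rec1 (\<lambda>x. ltl (f x))"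
  unfolding ltl_def by (intro rec_intros)

lemma rec1_lhd: "rec1 f \<Longrightarrow> rec1 (\<lambda>x. lhd (f x))"
  unfolding lhd_def by (intro rec_intros)

lemma rec1_lcons: "rec1 f \<Longrightarrow> rec1 g \<Longrightarrow> rec1 (\<lambda>x. lcons (f x) (g x))"
  unfolding lcons_def by (intro rec_intros)

lemma rec1_ldrop: "rec1 f \<Longrightarrow> rec1 g \<Longrightarrow> rec1 (\<lambda>x. ldrop (f x) (g x))"
  unfolding ldrop_def by (intro rec1_PR rec1_ltl rec_intros)

lemma rec1_lnth: "rec1 f \<Longrightarrow> rec1 g \<Longrightarrow> rec1 (\<lambda>x. lnth (f x) (g x))"
  unfolding lnth_def by (intro rec1_lhd rec1_ldrop)

lemma rec1_Stk: "rec1 Stk"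
  unfolding Stk_def by (intro rec1_lcons rec1_lnth rec_intros)

lemma rec1_tk: "rec1 f \<Longrightarrow> rec1 g \<Longrightarrow> rec1 (\<lambda>x. tk (f x) (g x))"
  unfolding tk_def by (intro rec1_PR rec1_Stk rec_intros)

lemmas rec_intros2 = rec1_ltl rec1_lhd rec1_lcons rec1_ldrop rec1_lnth rec1_tk

lemma list_decode_lcons[simp]: "list_decode (lcons x l) = x # list_decode l"
  unfolding lcons_def by simp

lemma list_decode_nz: "c \<noteq> 0 \<Longrightarrow> list_decode c = lhd c # list_decode (ltl c)"
  unfolding lhd_def ltl_def by (cases c) (auto split: prod.split)

lemma list_decode_eq0[simp]: "list_decode c = [] \<longleftrightarrow> c = 0"
  by (metis list_decode.simps(1) list_decode_inverse list_encode.simps(1))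

lemma list_decode_ltl: "list_decode (ltl c) = tl (list_decode c)"
  by (cases "c = 0") (simp add: ltl_def, subst (2) list_decode_nz, auto)

lemma list_decode_ldrop: "list_decode (ldrop i c) = drop i (list_decode c)"
proof (induction i)
  case 0
  then show ?case by (simp add: ldrop_def)
next
  case (Suc i)
  have "ldrop (Suc i) c = ltl (ldrop i c)" by (simp add: ldrop_def)
  then show ?case using Suc by (simp add: list_decode_ltl drop_Suc tl_drop)
qed

lemma ldrop_nz: "ldrop i c \<noteq> 0 \<longleftrightarrow> i < length (list_decode c)"
  using list_decode_ldrop[of i c] list_decode_eq0[of "ldrop i c"] by auto

lemma lnth_eq: "i < length (list_decode c) \<Longrightarrow> lnth c i = list_decode c ! i"
proof -
  assume i: "i < length (list_decode c)"
  then have nz: "ldrop i c \<noteq> 0" using ldrop_nz by blast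
  have "drop i (list_decode c) = list_decode c ! i # drop (Suc i) (list_decode c)"
    using i by (rule Cons_nth_drop_Suc[symmetric])
  moreover have "drop i (list_decode c) = lhd (ldrop i c) # list_decode (ltl (ldrop i c))"
    using list_decode_nz[OF nz] by (simp add: list_decode_ldrop)
  ultimately show ?thesis unfolding lnth_def by simp
qed

lemma length_list_decode_le: "length (list_decode c) \<le> c"
proof (induction c rule: list_decode.induct)
  case 1
  then show ?case by simp
next
  case (2 n)
  obtain x y where xy: "prod_decode n = (x, y)" by (cases "prod_decode n")
  have "y \<le> n" using le_prod_encode_2[of y x] by (metis prod_decode_inverse xy)
  then show ?case using 2 xy by simp
qed

lemma tk_aux:
  assumes "L \<le> length (list_decode d)" "m \<le> L"
  shows "list_decode (PR (\<lambda>_. 0) Stk m (prod_encode (d, L))) = drop (L - m) (take L (list_decode d))"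
  using assms(2)
proof (induction m)
  case 0
  then show ?case by simp
next
  case (Suc m)
  let ?xs = "list_decode d"
  have j: "L - Suc m < length (take L ?xs)" using Suc.prems assms(1) by simp
  have "drop (L - Suc m) (take L ?xs) = take L ?xs ! (L - Suc m) # drop (Suc (L - Suc m)) (take L ?xs)"
    using j by (rule Cons_nth_drop_Suc[symmetric])
  also have "Suc (L - Suc m) = L - m" using Suc.prems by simp
  also have "take L ?xs ! (L - Suc m) = ?xs ! (L - Suc m)" using Suc.prems by simp
  also have "?xs ! (L - Suc m) = lnth d (L - Suc m)" using Suc.prems assms(1) by (simp add: lnth_eq)
  finally show ?case using Suc by (simp add: Stk_def)
qed

lemma list_decode_tk: "L \<le> length (list_decode d) \<Longrightarrow> list_decode (tk d L) = take L (list_decode d)"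
  unfolding tk_def using tk_aux[of L d L] by simp

lemma ldrop_pos: "0 < ldrop i c \<longleftrightarrow> i < length (list_decode c)"
  using ldrop_nz by auto

lemma ball_code:
  "(\<forall>j<c. ldrop j c \<noteq> 0 \<longrightarrow> P j (lnth c j)) \<longleftrightarrow> (\<forall>j<length (list_decode c). P j (list_decode c ! j))"
  using length_list_decode_le[of c] by (auto simp: ldrop_pos lnth_eq)

lemma bex_code:
  "(\<exists>j<c. ldrop j c \<noteq> 0 \<and> P j (lnth c j)) \<longleftrightarrow> (\<exists>j<length (list_decode c). P j (list_decode c ! j))"
proof
  assume "\<exists>j<c. ldrop j c \<noteq> 0 \<and> P j (lnth c j)"
  then obtain j where "ldrop j c \<noteq> 0" "P j (lnth c j)" by blast
  then have "j < length (list_decode c)" "P j (list_decode c ! j)" by (auto simp: ldrop_nz ldrop_pos lnth_eq)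
  then show "\<exists>j<length (list_decode c). P j (list_decode c ! j)" by blast
next
  assume "\<exists>j<length (list_decode c). P j (list_decode c ! j)"
  then obtain j where j: "j < length (list_decode c)" "P j (list_decode c ! j)" by blast
  then have "j < c" using length_list_decode_le[of c] by simp
  then show "\<exists>j<c. ldrop j c \<noteq> 0 \<and> P j (lnth c j)" using j by (auto simp: ldrop_nz ldrop_pos lnth_eq)
qed

lemma rec1p_iff: "rec1p P \<Longrightarrow> rec1p Q \<Longrightarrow> rec1p (\<lambda>x. P x = Q x)"
proof -
  assume "rec1p P" "rec1p Q"
  then have "rec1p (\<lambda>x. (P x \<longrightarrow> Q x) \<and> (Q x \<longrightarrow> P x))" by (intro rec1p_conj rec1p_imp)
  then show ?thesis by (rule back_subst[of rec1p]) auto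
qed

abbreviation "EC c \<equiv> snd (prod_decode c)"
abbreviation "MC c \<equiv> fst (prod_decode c)"
abbreviation "ea d \<equiv> fst (prod_decode d)"
abbreviation "eb d \<equiv> fst (prod_decode (snd (prod_decode d)))"
abbreviation "ek d \<equiv> snd (prod_decode (snd (prod_decode d)))"
abbreviation "PC y \<equiv> fst (prod_decode y)"
abbreviation "WC y \<equiv> snd (prod_decode y)"

definition check1 :: "nat \<Rightarrow> nat \<Rightarrow> bool" where
  "check1 Lg c \<longleftrightarrow> (\<forall>j<EC c. ldrop j (EC c) \<noteq> 0 \<longrightarrow>
      ea (lnth (EC c) j) < MC c \<and> eb (lnth (EC c) j) < MC c \<and> ek (lnth (EC c) j) < 2 * Lg)"

definition check2 :: "(nat \<Rightarrow> nat) \<Rightarrow> nat \<Rightarrow> bool" where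
  "check2 wp c \<longleftrightarrow> (\<forall>j<EC c. ldrop j (EC c) \<noteq> 0 \<longrightarrow>
     (\<exists>j'<EC c. ldrop j' (EC c) \<noteq> 0 \<and> ea (lnth (EC c) j') = eb (lnth (EC c) j) \<and>
        eb (lnth (EC c) j') = ea (lnth (EC c) j) \<and>
        wp (lcons (ek (lnth (EC c) j)) (lcons (ek (lnth (EC c) j')) 0)) = 1))"

definition check3 :: "(nat \<Rightarrow> nat) \<Rightarrow> nat \<Rightarrow> nat \<Rightarrow> bool" where
  "check3 wp c y \<longleftrightarrow>
     ldrop 2 (PC y) \<noteq> 0 \<and>
     (\<forall>t<PC y + WC y + 1. (ldrop t (PC y) = 0) = (ldrop t (WC y) = 0)) \<and>
     (\<forall>t<PC y. ldrop t (PC y) \<noteq> 0 \<longrightarrow>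
        ldrop (lnth (PC y) t) (EC c) \<noteq> 0 \<and> lnth (WC y) t = ek (lnth (EC c) (lnth (PC y) t))) \<and>
     (\<forall>t<PC y. ldrop (Suc t) (PC y) \<noteq> 0 \<longrightarrow>
        eb (lnth (EC c) (lnth (PC y) t)) = ea (lnth (EC c) (lnth (PC y) (Suc t)))) \<and>
     wp (WC y) = 1 \<and>
     (\<forall>j<PC y. \<forall>i<j. ldrop j (PC y) \<noteq> 0 \<longrightarrow> wp (tk (ldrop i (WC y)) (j - i)) = 0)"

definition check :: "(nat \<Rightarrow> nat) \<Rightarrow> nat \<Rightarrow> nat \<Rightarrow> nat \<Rightarrow> bool" where
  "check wp Lg c y \<longleftrightarrow> check1 Lg c \<and> check2 wp c \<and> check3 wp c y"

lemma rec_check: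
  assumes W: "rec1 wp"
  shows "rec1p (\<lambda>z. check wp Lg (fst (prod_decode z)) (snd (prod_decode z)))"
  unfolding check_def check1_def check2_def check3_def
  by (intro rec_intros rec_intros2 rec1p_iff rec1_comp[OF W])

lemma edge_decode_eq: "edge_decode d = (ea d, eb d, ek d)"
  unfolding edge_decode_def by (simp add: case_prod_beta)

lemma lcons2: "lcons k (lcons k' 0) = list_encode [k, k']"
  by (simp add: lcons_def)

lemma ball_code_set:
  "(\<forall>j<c. ldrop j c \<noteq> 0 \<longrightarrow> Q (lnth c j)) \<longleftrightarrow> (\<forall>d\<in>set (list_decode c). Q d)"
  using ball_code[of c "\<lambda>j d. Q d"] by (simp add: all_set_conv_all_nth)

lemma bex_code_set:
  "(\<exists>j<c. ldrop j c \<noteq> 0 \<and> Q (lnth c j)) \<longleftrightarrow> (\<exists>d\<in>set (list_decode c). Q d)"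
  using bex_code[of c "\<lambda>j d. Q d"] by (metis in_set_conv_nth)

locale gwp = group G for G :: "('a, 'b) monoid_scheme" (structure) +
  fixes gens :: "'a list"
  assumes gens_carr: "set gens \<subseteq> carrier G"
begin

abbreviation "lv \<equiv> letter_val G gens"
abbreviation "wv \<equiv> word_val G gens"
abbreviation "vl \<equiv> valid_letter gens"
definition "wp x = (if x \<in> word_problem G gens then 1 else (0::nat))"

lemma lv_carr: "vl k \<Longrightarrow> lv k \<in> carrier G"
  unfolding letter_val_def valid_letter_def using gens_carr nth_mem by auto

lemma lv_S: "vl k \<Longrightarrow> lv k \<in> set gens \<union> m_inv G ` set gens"
  unfolding letter_val_def valid_letter_def using nth_mem by auto

lemma wv_Nil[simp]: "wv [] = \<one>"
  by (simp add: word_val_def)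

lemma wv_Cons[simp]: "wv (k # w) = lv k \<otimes> wv w"
  by (simp add: word_val_def)

lemma wv_carr: "\<forall>k\<in>set w. vl k \<Longrightarrow> wv w \<in> carrier G"
  by (induction w) (auto intro: lv_carr)

lemma wv_append: "\<forall>k\<in>set w1. vl k \<Longrightarrow> \<forall>k\<in>set w2. vl k \<Longrightarrow> wv (w1 @ w2) = wv w1 \<otimes> wv w2"
  by (induction w1) (auto simp: m_assoc lv_carr wv_carr)

lemma wv_single: "vl k \<Longrightarrow> wv [k] = lv k"
  by (simp add: lv_carr)

lemma WP_iff: "c \<in> word_problem G gens \<longleftrightarrow> (\<forall>k\<in>set (list_decode c). vl k) \<and> wv (list_decode c) = \<one>"
  unfolding word_problem_def by simp

lemma vl_iff: "vl k \<longleftrightarrow> k < 2 * length gens"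
  unfolding valid_letter_def by auto

lemma prod_one_iff: "a \<in> carrier G \<Longrightarrow> b \<in> carrier G \<Longrightarrow> a \<otimes> b = \<one> \<longleftrightarrow> b = inv a"
  by (metis inv_equality inv_inv r_inv inv_closed)

lemma code_graph_eq:
  "code_graph G gens c = (\<lambda>d. (ea d, eb d, lv (ek d))) ` set (list_decode (EC c))"
  unfolding code_graph_def code_edges_def by (simp add: image_image edge_decode_eq case_prod_beta)

lemma valid_code_iff:
  "valid_code gens c \<longleftrightarrow> (\<forall>d\<in>set (list_decode (EC c)). ea d < MC c \<and> eb d < MC c \<and> vl (ek d))"
  unfolding valid_code_def code_edges_def code_tiles_def by (auto simp: edge_decode_eq)

lemma check1_iff: "check1 (length gens) c \<longleftrightarrow> valid_code gens c"
  unfolding check1_def valid_code_iff vl_iff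
  by (rule ball_code_set[of "EC c" "\<lambda>d. ea d < MC c \<and> eb d < MC c \<and> ek d < 2 * length gens"])

lemma check2_iff:
  assumes V: "valid_code gens c"
  shows "check2 wp c \<longleftrightarrow> tileset_graph G (set gens) (code_tiles c) (code_graph G gens c)"
proof -
  let ?xs = "list_decode (EC c)"
  have vk: "vl (ek d)" if "d \<in> set ?xs" for d using V that unfolding valid_code_iff by auto
  have wpe: "wp (lcons (ek d) (lcons (ek d') 0)) = 1 \<longleftrightarrow> lv (ek d') = inv (lv (ek d))"
    if "d \<in> set ?xs" "d' \<in> set ?xs" for d d'
    using vk[OF that(1)] vk[OF that(2)] unfolding wp_def lcons2 WP_iff
    by (simp add: prod_one_iff lv_carr)
  have inner: "(\<exists>j'<EC c. ldrop j' (EC c) \<noteq> 0 \<and> ea (lnth (EC c) j') = eb d \<and>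
        eb (lnth (EC c) j') = ea d \<and> wp (lcons (ek d) (lcons (ek (lnth (EC c) j')) 0)) = 1)
     \<longleftrightarrow> (\<exists>d'\<in>set ?xs. ea d' = eb d \<and> eb d' = ea d \<and> wp (lcons (ek d) (lcons (ek d') 0)) = 1)" for d
    by (rule bex_code_set[of "EC c" "\<lambda>d'. ea d' = eb d \<and> eb d' = ea d \<and> wp (lcons (ek d) (lcons (ek d') 0)) = 1"])
  have "check2 wp c \<longleftrightarrow> (\<forall>d\<in>set ?xs. \<exists>j'<EC c. ldrop j' (EC c) \<noteq> 0 \<and> ea (lnth (EC c) j') = eb d \<and>
        eb (lnth (EC c) j') = ea d \<and> wp (lcons (ek d) (lcons (ek (lnth (EC c) j')) 0)) = 1)"
    unfolding check2_def
    by (rule ball_code_set[of "EC c" "\<lambda>d. \<exists>j'<EC c. ldrop j' (EC c) \<noteq> 0 \<and> ea (lnth (EC c) j') = eb d \<and>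
        eb (lnth (EC c) j') = ea d \<and> wp (lcons (ek d) (lcons (ek (lnth (EC c) j')) 0)) = 1"])
  also have "\<dots> \<longleftrightarrow> (\<forall>d\<in>set ?xs. \<exists>d'\<in>set ?xs. ea d' = eb d \<and> eb d' = ea d \<and>
        wp (lcons (ek d) (lcons (ek d') 0)) = 1)"
    by (simp only: inner)
  also have "\<dots> \<longleftrightarrow> (\<forall>d\<in>set ?xs. \<exists>d'\<in>set ?xs. ea d' = eb d \<and> eb d' = ea d \<and> lv (ek d') = inv (lv (ek d)))"
    by (rule ball_cong[OF refl], rule bex_cong[OF refl]) (simp only: wpe)
  also have "\<dots> \<longleftrightarrow> tileset_graph G (set gens) (code_tiles c) (code_graph G gens c)"
  proof -
    have sub: "code_graph G gens c \<subseteq> code_tiles c \<times> code_tiles c \<times> (set gens \<union> m_inv G ` set gens)"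
      unfolding code_graph_eq
    proof (rule image_subsetI)
      fix d assume d: "d \<in> set ?xs"
      then show "(ea d, eb d, lv (ek d)) \<in> code_tiles c \<times> code_tiles c \<times> (set gens \<union> m_inv G ` set gens)"
      proof -
        have "ea d < MC c" "eb d < MC c" using V d unfolding valid_code_iff by auto
        then show ?thesis using lv_S[OF vk[OF d]] unfolding code_tiles_def by simp
      qed
    qed
    have fin: "finite (code_tiles c)" "finite (code_graph G gens c)"
      unfolding code_graph_eq code_tiles_def by auto
    let ?img = "(\<lambda>d. (ea d, eb d, lv (ek d))) ` set ?xs"
    have "(\<forall>d\<in>set ?xs. \<exists>d'\<in>set ?xs. ea d' = eb d \<and> eb d' = ea d \<and> lv (ek d') = inv (lv (ek d)))
       \<longleftrightarrow> (\<forall>a a' s. (a, a', s) \<in> ?img \<longrightarrow> (a', a, inv s) \<in> ?img)"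
    proof
      assume H: "\<forall>d\<in>set ?xs. \<exists>d'\<in>set ?xs. ea d' = eb d \<and> eb d' = ea d \<and> lv (ek d') = inv (lv (ek d))"
      show "\<forall>a a' s. (a, a', s) \<in> ?img \<longrightarrow> (a', a, inv s) \<in> ?img"
      proof (intro allI impI)
        fix a a' s assume "(a, a', s) \<in> ?img"
        then obtain d where d0: "d \<in> set ?xs" "(a, a', s) = (ea d, eb d, lv (ek d))" by blast
        then have d: "d \<in> set ?xs" "a = ea d" "a' = eb d" "s = lv (ek d)" by simp_all
        then obtain d' where d': "d' \<in> set ?xs" "ea d' = eb d" "eb d' = ea d" "lv (ek d') = inv (lv (ek d))"
          using H by blast
        have "(a', a, inv s) = (\<lambda>d. (ea d, eb d, lv (ek d))) d'" using d d' by simp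
        then show "(a', a, inv s) \<in> ?img" using d'(1) by (rule image_eqI)
      qed
    next
      assume H: "\<forall>a a' s. (a, a', s) \<in> ?img \<longrightarrow> (a', a, inv s) \<in> ?img"
      show "\<forall>d\<in>set ?xs. \<exists>d'\<in>set ?xs. ea d' = eb d \<and> eb d' = ea d \<and> lv (ek d') = inv (lv (ek d))"
      proof
        fix d assume d: "d \<in> set ?xs"
        then have "(ea d, eb d, lv (ek d)) \<in> ?img" by blast
        then have "(eb d, ea d, inv (lv (ek d))) \<in> ?img" using H by blast
        then obtain d' where "d' \<in> set ?xs" "(eb d, ea d, inv (lv (ek d))) = (ea d', eb d', lv (ek d'))"
          by blast
        then show "\<exists>d'\<in>set ?xs. ea d' = eb d \<and> eb d' = ea d \<and> lv (ek d') = inv (lv (ek d))" by auto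
      qed
    qed
    moreover have "tileset_graph G (set gens) (code_tiles c) (code_graph G gens c) \<longleftrightarrow>
      (\<forall>a a' s. (a, a', s) \<in> code_graph G gens c \<longrightarrow> (a', a, inv s) \<in> code_graph G gens c)"
      unfolding tileset_graph_def by (simp only: sub fin simp_thms)
    ultimately show ?thesis unfolding code_graph_eq by (rule trans[OF _ sym])
  qed
  finally show ?thesis .
qed


lemma cancel_aux: "a \<in> carrier G \<Longrightarrow> x \<in> carrier G \<Longrightarrow> a \<otimes> (inv a \<otimes> x) = x"
  by (simp add: m_assoc[symmetric])

lemma cancel_aux2: "a \<in> carrier G \<Longrightarrow> x \<in> carrier G \<Longrightarrow> inv a \<otimes> (a \<otimes> x) = x"
  by (simp add: m_assoc[symmetric])

lemma check3_sound:
  assumes V: "valid_code gens c" and C: "check3 wp c y"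
  shows "has_ouroboros G (set gens) (code_tiles c) (code_graph G gens c)"
proof -
  let ?xs = "list_decode (EC c)"
  let ?ps = "list_decode (PC y)"
  let ?ws = "list_decode (WC y)"
  define n where "n = length ?ps"
  have h1: "ldrop 2 (PC y) \<noteq> 0"
    and h2: "\<forall>t<PC y + WC y + 1. (ldrop t (PC y) = 0) = (ldrop t (WC y) = 0)"
    and h3: "\<forall>t<PC y. ldrop t (PC y) \<noteq> 0 \<longrightarrow>
        ldrop (lnth (PC y) t) (EC c) \<noteq> 0 \<and> lnth (WC y) t = ek (lnth (EC c) (lnth (PC y) t))"
    and h4: "\<forall>t<PC y. ldrop (Suc t) (PC y) \<noteq> 0 \<longrightarrow>
        eb (lnth (EC c) (lnth (PC y) t)) = ea (lnth (EC c) (lnth (PC y) (Suc t)))"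
    and h5: "wp (WC y) = 1"
    and h6: "\<forall>j<PC y. \<forall>i<j. ldrop j (PC y) \<noteq> 0 \<longrightarrow> wp (tk (ldrop i (WC y)) (j - i)) = 0"
    using C unfolding check3_def by blast+
  have n2: "2 < n" using h1 unfolding n_def ldrop_nz .
  have nP: "n \<le> PC y" unfolding n_def by (rule length_list_decode_le)
  have lenW: "length ?ws = n"
  proof -
    have "ldrop n (PC y) = 0" unfolding n_def using ldrop_nz[of "length ?ps" "PC y"] by simp
    then have "ldrop n (WC y) = 0" using h2 nP by auto
    then have a: "length ?ws \<le> n" using ldrop_nz[of n "WC y"] by simp
    have "length ?ws \<le> WC y" by (rule length_list_decode_le)
    moreover have "ldrop (length ?ws) (WC y) = 0" using ldrop_nz[of "length ?ws" "WC y"] by simp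
    ultimately have "ldrop (length ?ws) (PC y) = 0" using h2 by auto
    then have "n \<le> length ?ws" using ldrop_nz[of "length ?ws" "PC y"] unfolding n_def by simp
    then show ?thesis using a by simp
  qed
  have vx: "ea d < MC c \<and> eb d < MC c \<and> vl (ek d)" if "d \<in> set ?xs" for d
    using V that unfolding valid_code_iff by blast
  have hp: "?ps ! t < length ?xs \<and> ?ws ! t = ek (?xs ! (?ps ! t))" if t: "t < n" for t
  proof -
    have t1: "t < PC y" "ldrop t (PC y) \<noteq> 0" using t nP unfolding n_def ldrop_nz by auto
    have ln: "lnth (PC y) t = ?ps ! t" using t unfolding n_def by (simp add: lnth_eq)
    have "ldrop (?ps ! t) (EC c) \<noteq> 0" and e: "lnth (WC y) t = ek (lnth (EC c) (?ps ! t))"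
      using h3 t1 ln by auto
    then have pt: "?ps ! t < length ?xs" by (simp add: ldrop_pos)
    moreover have "lnth (WC y) t = ?ws ! t" using t lenW by (simp add: lnth_eq)
    moreover have "lnth (EC c) (?ps ! t) = ?xs ! (?ps ! t)" using pt by (simp add: lnth_eq)
    ultimately show ?thesis using e by simp
  qed
  have hc: "eb (?xs ! (?ps ! t)) = ea (?xs ! (?ps ! Suc t))" if t: "Suc t < n" for t
  proof -
    have t1: "t < PC y" "ldrop (Suc t) (PC y) \<noteq> 0" using t nP unfolding n_def ldrop_nz by auto
    have "eb (lnth (EC c) (lnth (PC y) t)) = ea (lnth (EC c) (lnth (PC y) (Suc t)))" using h4 t1 by blast
    moreover have "lnth (PC y) t = ?ps ! t" "lnth (PC y) (Suc t) = ?ps ! Suc t"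
      using t unfolding n_def by (simp_all add: lnth_eq)
    moreover have "lnth (EC c) (?ps ! t) = ?xs ! (?ps ! t)" "lnth (EC c) (?ps ! Suc t) = ?xs ! (?ps ! Suc t)"
      using hp[of t] hp[of "Suc t"] t by (simp_all add: lnth_eq)
    ultimately show ?thesis by simp
  qed
  have WPw: "WC y \<in> word_problem G gens" using h5 unfolding wp_def by (auto split: if_splits)
  then have vws: "\<forall>k\<in>set ?ws. vl k" and wvw: "wv ?ws = \<one>" unfolding WP_iff by auto
  have hseg: "wv (take (j - i) (drop i ?ws)) \<noteq> \<one>" if ij: "i < j" "j < n" for i j
  proof -
    have j1: "j < PC y" "ldrop j (PC y) \<noteq> 0" using ij nP unfolding n_def ldrop_nz by auto
    then have "wp (tk (ldrop i (WC y)) (j - i)) = 0" using h6 ij by blast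
    then have nW: "tk (ldrop i (WC y)) (j - i) \<notin> word_problem G gens" unfolding wp_def by auto
    have "j - i \<le> length (list_decode (ldrop i (WC y)))" using ij lenW by (simp add: list_decode_ldrop)
    then have "list_decode (tk (ldrop i (WC y)) (j - i)) = take (j - i) (drop i ?ws)"
      by (simp add: list_decode_tk list_decode_ldrop)
    moreover have "\<forall>k\<in>set (take (j - i) (drop i ?ws)). vl k"
      using vws by (auto dest: in_set_takeD in_set_dropD)
    ultimately show ?thesis using nW unfolding WP_iff by auto
  qed
  define \<omega> where "\<omega> i = wv (take i ?ws)" for i
  define \<zeta> where "\<zeta> i = (if i < n then ea (?xs ! (?ps ! i)) else eb (?xs ! (?ps ! (n - 1))))" for i
  have \<omega>c: "\<omega> i \<in> carrier G" for i
    unfolding \<omega>_def using vws by (intro wv_carr) (auto dest: in_set_takeD)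
  have lvc: "vl (?ws ! i)" if "i < n" for i using vws that lenW by simp
  have \<omega>S: "\<omega> (Suc i) = \<omega> i \<otimes> lv (?ws ! i)" if "i < n" for i
  proof -
    have "take (Suc i) ?ws = take i ?ws @ [?ws ! i]" using that lenW by (simp add: take_Suc_conv_app_nth)
    moreover have "\<forall>k\<in>set (take i ?ws). vl k" using vws by (auto dest: in_set_takeD)
    ultimately show ?thesis unfolding \<omega>_def using lvc[OF that]
      by (simp add: wv_append lv_carr)
  qed
  have d\<omega>: "inv (\<omega> i) \<otimes> \<omega> (Suc i) = lv (?ws ! i)" if "i < n" for i
    using \<omega>S[OF that] \<omega>c lv_carr[OF lvc[OF that]] by (simp add: cancel_aux2)
  have neq: "\<omega> i \<noteq> \<omega> j" if "i < j" "j < n" for i j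
  proof
    assume eq: "\<omega> i = \<omega> j"
    have "take j ?ws = take i ?ws @ take (j - i) (drop i ?ws)"
      using take_add[of i "j - i" ?ws] that by simp
    then have "\<omega> j = \<omega> i \<otimes> wv (take (j - i) (drop i ?ws))"
      unfolding \<omega>_def
    proof -
      have "\<forall>k\<in>set (take i ?ws). vl k" "\<forall>k\<in>set (take (j - i) (drop i ?ws)). vl k"
        using vws by (auto dest: in_set_takeD in_set_dropD)
      then show "take j ?ws = take i ?ws @ take (j - i) (drop i ?ws) \<Longrightarrow>
          wv (take j ?ws) = wv (take i ?ws) \<otimes> wv (take (j - i) (drop i ?ws))"
        by (simp add: wv_append)
    qed
    moreover have "wv (take (j - i) (drop i ?ws)) \<in> carrier G"
      using vws by (intro wv_carr) (auto dest: in_set_takeD in_set_dropD)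
    ultimately have "wv (take (j - i) (drop i ?ws)) = \<one>" using eq \<omega>c by simp
    then show False using hseg that by blast
  qed
  have "is_ouroboros G (set gens) (code_tiles c) (code_graph G gens c) n \<omega> \<zeta>"
    unfolding is_ouroboros_def
  proof (intro conjI allI impI)
    show "3 \<le> n" using n2 by simp
    show "\<omega> i \<in> carrier G" for i by (rule \<omega>c)
    show "inj_on \<omega> {0..<n}"
    proof (rule inj_onI)
      fix i j assume "i \<in> {0..<n}" "j \<in> {0..<n}" "\<omega> i = \<omega> j"
      then show "i = j" using neq by (metis atLeastLessThan_iff linorder_neqE_nat)
    qed
    show "\<omega> n = \<omega> 0" unfolding \<omega>_def using lenW wvw by simp
    show "\<zeta> i \<in> code_tiles c" if "i \<le> n" for i
    proof (cases "i < n")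
      case True
      then show ?thesis using hp[OF True] vx[of "?xs ! (?ps ! i)"] unfolding \<zeta>_def code_tiles_def by simp
    next
      case False
      have "n - 1 < n" using n2 by simp
      then show ?thesis using False hp[of "n - 1"] vx[of "?xs ! (?ps ! (n - 1))"] unfolding \<zeta>_def code_tiles_def by simp
    qed
    fix i assume i: "i < n"
    show "inv (\<omega> i) \<otimes> \<omega> (Suc i) \<in> set gens \<union> m_inv G ` set gens"
      using d\<omega>[OF i] lv_S[OF lvc[OF i]] by simp
    have mem: "?xs ! (?ps ! i) \<in> set ?xs" using hp[OF i] by simp
    have z1: "\<zeta> i = ea (?xs ! (?ps ! i))" using i unfolding \<zeta>_def by simp
    have z2: "\<zeta> (Suc i) = eb (?xs ! (?ps ! i))"
    proof (cases "Suc i < n")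
      case True
      then show ?thesis unfolding \<zeta>_def using hc[OF True] by simp
    next
      case False
      then have "i = n - 1" using i by simp
      then show ?thesis unfolding \<zeta>_def using False by simp
    qed
    have "(\<zeta> i, \<zeta> (Suc i), inv (\<omega> i) \<otimes> \<omega> (Suc i)) =
        (\<lambda>d. (ea d, eb d, lv (ek d))) (?xs ! (?ps ! i))"
      using z1 z2 d\<omega>[OF i] hp[OF i] by simp
    then show "(\<zeta> i, \<zeta> (Suc i), inv (\<omega> i) \<otimes> \<omega> (Suc i)) \<in> code_graph G gens c"
      unfolding code_graph_eq using mem by (rule image_eqI)
  qed
  then show ?thesis unfolding has_ouroboros_def by blast
qed


lemma check3_complete:
  assumes V: "valid_code gens c" and O: "has_ouroboros G (set gens) (code_tiles c) (code_graph G gens c)"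
  shows "\<exists>y. check3 wp c y"
proof -
  let ?xs = "list_decode (EC c)"
  obtain n \<omega> \<zeta> where O': "is_ouroboros G (set gens) (code_tiles c) (code_graph G gens c) n \<omega> \<zeta>"
    using O unfolding has_ouroboros_def by blast
  have n3: "3 \<le> n" and \<omega>c: "\<And>i. i \<le> n \<Longrightarrow> \<omega> i \<in> carrier G" and inj: "inj_on \<omega> {0..<n}"
    and \<omega>n: "\<omega> n = \<omega> 0"
    and E: "\<And>i. i < n \<Longrightarrow> (\<zeta> i, \<zeta> (Suc i), inv (\<omega> i) \<otimes> \<omega> (Suc i)) \<in> code_graph G gens c"
    using O' unfolding is_ouroboros_def by blast+
  have vx: "ea d < MC c \<and> eb d < MC c \<and> vl (ek d)" if "d \<in> set ?xs" for d
    using V that unfolding valid_code_iff by blast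
  define Pp where "Pp i j \<longleftrightarrow> j < length ?xs \<and> ea (?xs ! j) = \<zeta> i \<and> eb (?xs ! j) = \<zeta> (Suc i) \<and>
      lv (ek (?xs ! j)) = inv (\<omega> i) \<otimes> \<omega> (Suc i)" for i j
  have exP: "\<exists>j. Pp i j" if i: "i < n" for i
  proof -
    obtain d where d: "d \<in> set ?xs" "(\<zeta> i, \<zeta> (Suc i), inv (\<omega> i) \<otimes> \<omega> (Suc i)) = (ea d, eb d, lv (ek d))"
      using E[OF i] unfolding code_graph_eq by blast
    then obtain j where "j < length ?xs" "d = ?xs ! j" by (metis in_set_conv_nth)
    then show ?thesis using d unfolding Pp_def by auto
  qed
  define p where "p i = (SOME j. Pp i j)" for i
  have pP: "Pp i (p i)" if "i < n" for i unfolding p_def using exP[OF that] by (rule someI_ex)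
  define ps where "ps = map p [0..<n]"
  define ws where "ws = map (\<lambda>i. ek (?xs ! p i)) [0..<n]"
  have lps: "length ps = n" and lws: "length ws = n" unfolding ps_def ws_def by simp_all
  have psn: "ps ! i = p i" "ws ! i = ek (?xs ! p i)" if "i < n" for i
    using that unfolding ps_def ws_def by simp_all
  have pl: "p i < length ?xs" if "i < n" for i using pP[OF that] unfolding Pp_def by simp
  have vws: "\<forall>k\<in>set ws. vl k"
  proof
    fix k assume "k \<in> set ws"
    then obtain i where "i < n" "k = ek (?xs ! p i)" unfolding ws_def by auto
    then show "vl k" using vx[of "?xs ! p i"] pl by simp
  qed
  have lvws: "lv (ws ! i) = inv (\<omega> i) \<otimes> \<omega> (Suc i)" if "i < n" for i
    using pP[OF that] psn[OF that] unfolding Pp_def by simp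
  have seg: "wv (take L (drop i ws)) = inv (\<omega> i) \<otimes> \<omega> (i + L)" if "i + L \<le> n" for i L
    using that
  proof (induction L)
    case 0
    then show ?case using \<omega>c[of i] by simp
  next
    case (Suc L)
    have iL: "i + L < n" using Suc.prems by simp
    have tk: "take (Suc L) (drop i ws) = take L (drop i ws) @ [ws ! (i + L)]"
      using iL lws by (simp add: take_Suc_conv_app_nth)
    have v1: "\<forall>k\<in>set (take L (drop i ws)). vl k" using vws by (auto dest: in_set_takeD in_set_dropD)
    have v2: "vl (ws ! (i + L))" using vws iL lws by simp
    have "wv (take (Suc L) (drop i ws)) = wv (take L (drop i ws)) \<otimes> lv (ws ! (i + L))"
      unfolding tk using v1 v2 by (simp add: wv_append lv_carr)
    also have "\<dots> = (inv (\<omega> i) \<otimes> \<omega> (i + L)) \<otimes> (inv (\<omega> (i + L)) \<otimes> \<omega> (Suc (i + L)))"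
      using Suc.IH iL lvws[OF iL] by simp
    also have "\<dots> = inv (\<omega> i) \<otimes> \<omega> (i + Suc L)"
      using \<omega>c[of i] \<omega>c[of "i + L"] \<omega>c[of "Suc (i + L)"] iL by (simp add: m_assoc cancel_aux)
    finally show ?case .
  qed
  have wvws: "wv ws = \<one>"
    using seg[of 0 n] lws \<omega>n \<omega>c[of 0] by simp
  have segne: "wv (take (j - i) (drop i ws)) \<noteq> \<one>" if ij: "i < j" "j < n" for i j
  proof
    assume "wv (take (j - i) (drop i ws)) = \<one>"
    then have "inv (\<omega> i) \<otimes> \<omega> j = \<one>" using seg[of i "j - i"] ij by simp
    then have "\<omega> j = \<omega> i" using \<omega>c[of i] \<omega>c[of j] ij by (simp add: inv_solve_left')
    then show False using inj ij unfolding inj_on_def by (metis atLeastLessThan_iff less_trans not_less0 less_irrefl zero_le)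
  qed
  define y where "y = prod_encode (list_encode ps, list_encode ws)"
  have PCy: "PC y = list_encode ps" and WCy: "WC y = list_encode ws" unfolding y_def by simp_all
  have dP: "list_decode (PC y) = ps" and dW: "list_decode (WC y) = ws" unfolding PCy WCy by simp_all
  have ldP: "ldrop t (PC y) \<noteq> 0 \<longleftrightarrow> t < n" for t using ldrop_nz[of t "PC y"] dP lps by simp
  have ldW: "ldrop t (WC y) \<noteq> 0 \<longleftrightarrow> t < n" for t using ldrop_nz[of t "WC y"] dW lws by simp
  have lnP: "lnth (PC y) t = p t" if "t < n" for t using lnth_eq[of t "PC y"] dP lps psn that by simp
  have lnW: "lnth (WC y) t = ek (?xs ! p t)" if "t < n" for t using lnth_eq[of t "WC y"] dW lws psn that by simp
  have lnE: "lnth (EC c) (p t) = ?xs ! p t" if "t < n" for t using lnth_eq pl[OF that] by blast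
  have "check3 wp c y"
    unfolding check3_def
  proof (intro conjI allI impI)
    show "ldrop 2 (PC y) \<noteq> 0" using ldP n3 by simp
    show "(ldrop t (PC y) = 0) = (ldrop t (WC y) = 0)" if "t < PC y + WC y + 1" for t
      using ldP[of t] ldW[of t] by blast
    fix t assume "t < PC y"
    {
      assume "ldrop t (PC y) \<noteq> 0"
      then have t: "t < n" using ldP by blast
      show "ldrop (lnth (PC y) t) (EC c) \<noteq> 0" using lnP[OF t] pl[OF t] ldrop_nz by simp
      show "lnth (WC y) t = ek (lnth (EC c) (lnth (PC y) t))" using lnP[OF t] lnW[OF t] lnE[OF t] by simp
    }
    assume "ldrop (Suc t) (PC y) \<noteq> 0"
    then have t: "Suc t < n" using ldP by blast
    then have t': "t < n" by simp
    show "eb (lnth (EC c) (lnth (PC y) t)) = ea (lnth (EC c) (lnth (PC y) (Suc t)))"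
      using lnP[OF t] lnP[OF t'] lnE[OF t] lnE[OF t'] pP[OF t] pP[OF t'] unfolding Pp_def by simp
  next
    show "wp (WC y) = 1" unfolding wp_def WP_iff dW using vws wvws by simp
  next
    fix j i assume j: "j < PC y" and i: "i < j" and jn: "ldrop j (PC y) \<noteq> 0"
    then have jn: "j < n" using ldP by blast
    have "j - i \<le> length (list_decode (ldrop i (WC y)))" using i jn lws dW by (simp add: list_decode_ldrop)
    then have "list_decode (tk (ldrop i (WC y)) (j - i)) = take (j - i) (drop i ws)"
      by (simp add: list_decode_tk list_decode_ldrop dW)
    then have "tk (ldrop i (WC y)) (j - i) \<notin> word_problem G gens"
      unfolding WP_iff using segne[OF i jn] by simp
    then show "wp (tk (ldrop i (WC y)) (j - i)) = 0" unfolding wp_def by simp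
  qed
  then show ?thesis by blast
qed

end

theorem proposition2:
  fixes G :: "('a, 'b) monoid_scheme" and S :: "'a set" and gens :: "'a list"
  assumes "group G"
    and "finite S" and "S \<subseteq> carrier G" and "generate G S = carrier G"
    and "set gens = S"
    and "decidable_set (word_problem G gens)"
  shows "sigma01 (ouroboros_problem G gens)"
proof -
  interpret gwp G gens
    by (rule gwp.intro[OF assms(1)]) (unfold_locales, use assms(3,5) in simp)
  obtain r where r: "\<forall>x. rec_eval r [x] (wp x)"
    using assms(6) unfolding decidable_set_def computable_def wp_def by blast
  have W: "rec1 wp"
    unfolding rec1_def recfn_def
  proof (rule exI[of _ r], intro allI impI)
    fix xs :: "nat list" assume "length xs = 1"
    then have "xs = [hd xs]" by (cases xs) auto
    then show "rec_eval r xs (wp (hd xs))" using r by metis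
  qed
  define R where "R = {z. check wp (length gens) (fst (prod_decode z)) (snd (prod_decode z))}"
  have "rec1 (\<lambda>z. if check wp (length gens) (fst (prod_decode z)) (snd (prod_decode z)) then 1 else 0)"
    using rec_check[OF W] unfolding rec1p_def .
  then obtain r' where r': "\<forall>xs. length xs = 1 \<longrightarrow> rec_eval r' xs
      (if check wp (length gens) (fst (prod_decode (hd xs))) (snd (prod_decode (hd xs))) then 1 else 0)"
    unfolding rec1_def recfn_def by blast
  have dec: "decidable_set R"
    unfolding decidable_set_def computable_def R_def
  proof (rule exI[of _ r'], rule allI)
    fix x
    show "rec_eval r' [x] (if x \<in> {z. check wp (length gens) (fst (prod_decode z)) (snd (prod_decode z))} then 1 else 0)"
      using r'[rule_format, of "[x]"] by simp
  qed
  have iff: "x \<in> ouroboros_problem G gens \<longleftrightarrow> (\<exists>y. prod_encode (x, y) \<in> R)" for x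
  proof
    assume x: "x \<in> ouroboros_problem G gens"
    then have V: "valid_code gens x" and T: "tileset_graph G (set gens) (code_tiles x) (code_graph G gens x)"
      and H: "has_ouroboros G (set gens) (code_tiles x) (code_graph G gens x)"
      unfolding ouroboros_problem_def by auto
    obtain y where "check3 wp x y" using check3_complete[OF V H] by blast
    moreover have "check1 (length gens) x" using V check1_iff by blast
    moreover have "check2 wp x" using check2_iff[OF V] T by blast
    ultimately show "\<exists>y. prod_encode (x, y) \<in> R" unfolding R_def check_def by auto
  next
    assume "\<exists>y. prod_encode (x, y) \<in> R"
    then obtain y where "check wp (length gens) x y" unfolding R_def by auto
    then have c1: "check1 (length gens) x" and c2: "check2 wp x" and c3: "check3 wp x y"
      unfolding check_def by auto
    have V: "valid_code gens x" using c1 check1_iff by blast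
    show "x \<in> ouroboros_problem G gens"
      unfolding ouroboros_problem_def
      using V check2_iff[OF V] c2 check3_sound[OF V c3] by blast
  qed
  show ?thesis unfolding sigma01_def using dec iff by blast
qed

end
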